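(* Let $E$ be a (Hausdorff, real) topological vector space. Every infinite absolutely Cauchy summable subset $S$ of $E$ contains an infinite subset $B$ such that the linear Kalton map $lK_B:lS_B\to E$ is a topologically isomorphic embedding.
   Context: For $b\in E$, $\mathbb{R}b=\{rb:r\in\mathbb{R}\}$ with the subspace topology. For $B\subseteq E\setminus\{0\}$, $lS_B=\bigoplus_{b\in B}\mathbb{R}b$ is the set of finitely supported elements of $\prod_{b\in B}\mathbb{R}b$, with the subspace topology of the Tychonoff product topology (so $lS_B\cong\mathbb{R}^{(B)}$). The linear Kalton map $lK_B:lS_B\to E$ is the unique linear map extending each inclusion $\mathbb{R}b\to E$, $b\in B$. A subset $S\subseteq E$ is absolutely Cauchy summable if for every neighbourhood $U$ of $0$ there is a finite $F\subseteq S$ such that the additive subgroup generated by $S\setminus F$ is contained in $U$. *)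

theory Defs
  imports "HOL-Analysis.Analysis"
begin

definition add_subgroup_generated :: "'a::ab_group_add set \<Rightarrow> 'a set" where
  "add_subgroup_generated A =
     \<Inter>{G. A \<subseteq> G \<and> 0 \<in> G \<and> (\<forall>x\<in>G. \<forall>y\<in>G. x - y \<in> G)}"

definition abs_cauchy_summable :: "'a::{ab_group_add,topological_space} set \<Rightarrow> bool" where
  "abs_cauchy_summable S \<longleftrightarrow>
     (\<forall>U. (\<exists>V. open V \<and> 0 \<in> V \<and> V \<subseteq> U) \<longrightarrow>
        (\<exists>F. finite F \<and> F \<subseteq> S \<and> add_subgroup_generated (S - F) \<subseteq> U))"

definition real_line_top :: "'a::{real_vector,topological_space} \<Rightarrow> 'a topology" where
  "real_line_top b = subtopology euclidean (range (\<lambda>r::real. r *\<^sub>R b))"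

text \<open>Elements are the
  (extensional) functions f on B with f b in R b, finitely many nonzero.\<close>
definition lS :: "'a::{real_vector,topological_space} set \<Rightarrow> ('a \<Rightarrow> 'a) topology" where
  "lS B = subtopology (product_topology real_line_top B)
            {f. finite {b\<in>B. f b \<noteq> 0}}"

definition lK :: "'a::real_vector set \<Rightarrow> ('a \<Rightarrow> 'a) \<Rightarrow> 'a" where
  "lK B f = (\<Sum>b\<in>{b\<in>B. f b \<noteq> 0}. f b)"

end

theory Submission
  imports Defs
begin
context
  assumes tvs: "continuous_on UNIV (\<lambda>p::real \<times> 'a::{real_vector, topological_ab_group_add, t2_space}. fst p *\<^sub>R snd p)"
begin

lemma tendsto_scale':
  fixes g :: "_ \<Rightarrow> 'a"
  assumes "(f \<longlongrightarrow> a) F" "(g \<longlongrightarrow> c) F"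
  shows "((\<lambda>x. f x *\<^sub>R g x) \<longlongrightarrow> a *\<^sub>R c) F"
proof -
  have "isCont (\<lambda>p::real \<times> 'a. fst p *\<^sub>R snd p) (a, c)"
    using tvs by (simp add: continuous_on_eq_continuous_at)
  from isCont_tendsto_compose[OF this tendsto_Pair[OF assms]] show ?thesis by simp
qed

lemma cont_scale':
  fixes g :: "_ \<Rightarrow> 'a"
  assumes "continuous_on A f" "continuous_on A g"
  shows "continuous_on A (\<lambda>x. f x *\<^sub>R g x)"
  using assms unfolding continuous_on_def by (auto intro: tendsto_scale')

lemma nbhd_add:
  fixes U :: "'a set"
  assumes "open U" "0 \<in> U"
  shows "\<exists>V. open V \<and> 0 \<in> V \<and> (\<forall>x\<in>V. \<forall>y\<in>V. x + y \<in> U)"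
proof -
  have "open ((\<lambda>p::'a\<times>'a. fst p + snd p) -` U)"
    by (rule open_vimage[OF assms(1)]) (intro continuous_intros)
  moreover have "(0,0) \<in> (\<lambda>p::'a\<times>'a. fst p + snd p) -` U" using assms by simp
  ultimately obtain A B where AB: "open A" "open B" "(0,0) \<in> A \<times> B"
    "A \<times> B \<subseteq> (\<lambda>p::'a\<times>'a. fst p + snd p) -` U"
    by (rule open_prod_elim)
  show ?thesis
  proof (intro exI[of _ "A \<inter> B"] conjI ballI)
    fix x y assume "x \<in> A \<inter> B" "y \<in> A \<inter> B"
    then have xy: "(x, y) \<in> A \<times> B" by simp
    have "(x, y) \<in> (\<lambda>p::'a\<times>'a. fst p + snd p) -` U" by (rule subsetD[OF AB(4) xy])
    then show "x + y \<in> U" by simp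
  qed (use AB in auto)
qed

lemma nbhd_scal:
  fixes U :: "'a set"
  assumes "open U" "0 \<in> U"
  shows "\<exists>d::real>0. \<exists>W. open W \<and> 0 \<in> W \<and> (\<forall>t x. \<bar>t\<bar> < d \<longrightarrow> x \<in> W \<longrightarrow> t *\<^sub>R x \<in> U)"
proof -
  have "open ((\<lambda>p::real\<times>'a. fst p *\<^sub>R snd p) -` U)"
    by (rule open_vimage[OF assms(1) tvs])
  moreover have "(0,0) \<in> (\<lambda>p::real\<times>'a. fst p *\<^sub>R snd p) -` U" using assms by simp
  ultimately obtain A B where AB: "open A" "open B" "(0,0) \<in> A \<times> B"
    "A \<times> B \<subseteq> (\<lambda>p::real\<times>'a. fst p *\<^sub>R snd p) -` U"
    by (rule open_prod_elim)
  then obtain d where d: "d > 0" "ball 0 d \<subseteq> A"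
    by (meson mem_Sigma_iff openE)
  show ?thesis
  proof (intro exI conjI allI impI)
    fix t x assume "\<bar>t\<bar> < d" "x \<in> B"
    then have "t \<in> A" using d by (auto simp: dist_real_def)
    then have tx: "(t, x) \<in> A \<times> B" using \<open>x \<in> B\<close> by simp
    have "(t, x) \<in> (\<lambda>p::real\<times>'a. fst p *\<^sub>R snd p) -` U" by (rule subsetD[OF AB(4) tx])
    then show "t *\<^sub>R x \<in> U" by simp
  qed (use d AB in auto)
qed

lemma line_small:
  fixes U :: "'a set"
  assumes "open U" "0 \<in> U"
  shows "\<exists>d::real>0. \<forall>t. \<bar>t\<bar> < d \<longrightarrow> t *\<^sub>R x \<in> U"
proof -
  have "open ((\<lambda>t::real. t *\<^sub>R x) -` U)"
    by (rule open_vimage[OF assms(1)]) (intro cont_scale' continuous_intros)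
  moreover have "0 \<in> (\<lambda>t::real. t *\<^sub>R x) -` U" using assms by simp
  ultimately obtain d where "d > 0" "ball 0 d \<subseteq> (\<lambda>t::real. t *\<^sub>R x) -` U"
    by (meson openE)
  then show ?thesis by (intro exI[of _ d]) (auto simp: dist_real_def)
qed

lemma open_translate:
  fixes U :: "'a set"
  assumes "open U"
  shows "open {x. x - a \<in> U}"
proof -
  have "open ((\<lambda>x. x - a) -` U)"
    by (rule open_vimage[OF assms]) (intro continuous_intros)
  then show ?thesis by (simp add: vimage_def)
qed

lemma open_scaled:
  fixes U :: "'a set"
  assumes "open U" "c \<noteq> 0"
  shows "open ((\<lambda>x. c *\<^sub>R x) ` U)"
proof -
  have "open ((\<lambda>x. inverse c *\<^sub>R x) -` U)"
    by (rule open_vimage[OF assms(1)]) (intro cont_scale' continuous_intros)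
  moreover have "(\<lambda>x. inverse c *\<^sub>R x) -` U = (\<lambda>x. c *\<^sub>R x) ` U"
  proof
    show "(\<lambda>x. inverse c *\<^sub>R x) -` U \<subseteq> (\<lambda>x. c *\<^sub>R x) ` U"
    proof
      fix y assume "y \<in> (\<lambda>x. inverse c *\<^sub>R x) -` U"
      then have "inverse c *\<^sub>R y \<in> U" by simp
      moreover have "y = c *\<^sub>R (inverse c *\<^sub>R y)" using assms(2) by simp
      ultimately show "y \<in> (\<lambda>x. c *\<^sub>R x) ` U" by blast
    qed
  qed (use assms(2) in auto)
  ultimately show ?thesis by simp
qed

lemma balanced_nbhd:
  fixes U :: "'a set"
  assumes "open U" "0 \<in> U"
  shows "\<exists>V. open V \<and> 0 \<in> V \<and> V \<subseteq> U \<and> (\<forall>x\<in>V. \<forall>t::real. \<bar>t\<bar> \<le> 1 \<longrightarrow> t *\<^sub>R x \<in> V)"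
proof -
  obtain d W where dW: "d > 0" "open W" "0 \<in> W" "\<And>t x. \<bar>t\<bar> < d \<Longrightarrow> x \<in> W \<Longrightarrow> t *\<^sub>R x \<in> U"
    using nbhd_scal[OF assms] by blast
  define V where "V = (\<Union>s\<in>{s. 0 < \<bar>s\<bar> \<and> \<bar>s\<bar> < d}. (\<lambda>x. s *\<^sub>R x) ` W)"
  have "open V" unfolding V_def using dW by (intro open_UN ballI open_scaled) auto
  moreover have "0 \<in> V" unfolding V_def using dW
    by (intro UN_I[of "d/2"]) (auto intro!: image_eqI[of _ _ 0])
  moreover have "V \<subseteq> U" unfolding V_def using dW by auto
  moreover have "\<forall>x\<in>V. \<forall>t. \<bar>t\<bar> \<le> 1 \<longrightarrow> t *\<^sub>R x \<in> V"
  proof (intro ballI allI impI)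
    fix x and t :: real assume "x \<in> V" "\<bar>t\<bar> \<le> 1"
    then obtain s w where sw: "0 < \<bar>s\<bar>" "\<bar>s\<bar> < d" "w \<in> W" "x = s *\<^sub>R w"
      unfolding V_def by auto
    show "t *\<^sub>R x \<in> V"
    proof (cases "t = 0")
      case True then show ?thesis using \<open>0 \<in> V\<close> by simp
    next
      case False
      have "\<bar>t * s\<bar> < d" using sw \<open>\<bar>t\<bar> \<le> 1\<close>
      proof -
        have "\<bar>t\<bar> * \<bar>s\<bar> \<le> \<bar>s\<bar>" using \<open>\<bar>t\<bar> \<le> 1\<close> by (simp add: mult_left_le_one_le)
        moreover have "\<bar>t * s\<bar> = \<bar>t\<bar> * \<bar>s\<bar>" by (rule abs_mult)
        ultimately show ?thesis using sw by linarith
      qed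
      moreover have "t *\<^sub>R x = (t * s) *\<^sub>R w" using sw by simp
      ultimately show ?thesis unfolding V_def using sw False
        by (intro UN_I[of "t * s"]) auto
    qed
  qed
  ultimately show ?thesis by (intro exI[of _ V] conjI)
qed

lemma nsum_nbhd:
  fixes U :: "'a set"
  assumes "open U" "0 \<in> U"
  shows "\<exists>V. open V \<and> 0 \<in> V \<and> (\<forall>(I::'i set) g. finite I \<longrightarrow> card I \<le> n \<longrightarrow> (\<forall>i\<in>I. g i \<in> V) \<longrightarrow> sum g I \<in> U)"
  using assms
proof (induction n arbitrary: U)
  case 0
  then show ?case by (intro exI[of _ UNIV]) auto
next
  case (Suc n)
  obtain W where W: "open W" "0 \<in> W" "\<forall>x\<in>W. \<forall>y\<in>W. x + y \<in> U"
    using nbhd_add[OF Suc.prems] by blast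
  obtain V where V: "open V" "0 \<in> V" "\<forall>(I::'i set) g. finite I \<longrightarrow> card I \<le> n \<longrightarrow> (\<forall>i\<in>I. g i \<in> V) \<longrightarrow> sum g I \<in> W"
    using Suc.IH[OF W(1,2)] by blast
  show ?case
  proof (intro exI[of _ "V \<inter> W"] conjI allI impI)
    fix I and g :: "'i \<Rightarrow> 'a"
    assume I: "finite I" "card I \<le> Suc n" "\<forall>i\<in>I. g i \<in> V \<inter> W"
    show "sum g I \<in> U"
    proof (cases "I = {}")
      case True then show ?thesis using Suc.prems by simp
    next
      case False
      then obtain i where i: "i \<in> I" by blast
      have "sum g I = g i + sum g (I - {i})" using I(1) i by (simp add: sum.remove)
      moreover have "sum g (I - {i}) \<in> W"
      proof -
        have "card (I - {i}) \<le> n" using I i by (simp add: card_Diff_singleton)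
        moreover have "\<forall>j\<in>I - {i}. g j \<in> V" using I by blast
        ultimately show ?thesis using V(3) I(1) by blast
      qed
      moreover have "g i \<in> W" using I i by auto
      ultimately show ?thesis using W(3) by simp
    qed
  qed (use V W in \<open>simp_all add: open_Int\<close>)
qed

lemma subgroup_int_comb:
  fixes A :: "'a set"
  assumes "finite T" "T \<subseteq> A"
  shows "(\<Sum>y\<in>T. of_int (k y) *\<^sub>R y) \<in> add_subgroup_generated A"
  unfolding add_subgroup_generated_def
proof (rule InterI)
  fix G assume "G \<in> {G. A \<subseteq> G \<and> 0 \<in> G \<and> (\<forall>x\<in>G. \<forall>y\<in>G. x - y \<in> G)}"
  then have G: "A \<subseteq> G" "0 \<in> G" "\<And>x y. x \<in> G \<Longrightarrow> y \<in> G \<Longrightarrow> x - y \<in> G" by auto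
  have neg: "- x \<in> G" if "x \<in> G" for x using G(3)[OF G(2) that] by simp
  have add: "x + y \<in> G" if "x \<in> G" "y \<in> G" for x y
    using G(3)[OF that(1) neg[OF that(2)]] by simp
  have nat: "of_nat n *\<^sub>R y \<in> G" if "y \<in> G" for y n
    by (induction n) (use G(2) add that in \<open>auto simp: scaleR_add_left\<close>)
  have int: "of_int j *\<^sub>R y \<in> G" if "y \<in> G" for y j
  proof (cases "j \<ge> 0")
    case True
    then obtain n where "j = int n" by (metis nonneg_eq_int)
    then show ?thesis using nat[OF that, of n] by simp
  next
    case False
    obtain n where "j = - int n" using False by (intro that[of "nat (-j)"]) simp
    then show ?thesis using neg[OF nat[OF that, of n]] by simp
  qed
  show "(\<Sum>y\<in>T. of_int (k y) *\<^sub>R y) \<in> G"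
    using assms
  proof (induction T rule: finite_induct)
    case empty then show ?case using G(2) by simp
  next
    case (insert x F)
    then have "x \<in> G" "(\<Sum>y\<in>F. of_int (k y) *\<^sub>R y) \<in> G" using G(1) by auto
    then show ?case using insert(1,2) by (simp add: add int)
  qed
qed

lemma span_small:
  fixes S U :: "'a set"
  assumes acs: "abs_cauchy_summable S" and U: "open U" "0 \<in> U"
  shows "\<exists>F. finite F \<and> F \<subseteq> S \<and> span (S - F) \<subseteq> U"
proof -
  obtain V0 where V0: "open V0" "0 \<in> V0" "\<forall>x\<in>V0. \<forall>y\<in>V0. x + y \<in> U"
    using nbhd_add[OF U] by blast
  obtain V where V: "open V" "0 \<in> V" "V \<subseteq> V0" "\<forall>x\<in>V. \<forall>t::real. \<bar>t\<bar> \<le> 1 \<longrightarrow> t *\<^sub>R x \<in> V"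
    using balanced_nbhd[OF V0(1,2)] by blast
  obtain F where F: "finite F" "F \<subseteq> S" "add_subgroup_generated (S - F) \<subseteq> V"
    using acs V(1,2) unfolding abs_cauchy_summable_def by blast
  have "span (S - F) \<subseteq> U"
  proof
    fix x assume "x \<in> span (S - F)"
    then obtain T u where T: "finite T" "T \<subseteq> S - F" and x: "x = (\<Sum>y\<in>T. u y *\<^sub>R y)"
      unfolding span_explicit by blast
    obtain V' where V': "open V'" "0 \<in> V'"
      "\<forall>(I::'a set) g. finite I \<longrightarrow> card I \<le> card T \<longrightarrow> (\<forall>i\<in>I. g i \<in> V') \<longrightarrow> sum g I \<in> V"
      using nsum_nbhd[OF V(1,2)] by blast
    have "\<forall>y. \<exists>d::real>0. \<forall>t. \<bar>t\<bar> < d \<longrightarrow> t *\<^sub>R y \<in> V'"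
      using line_small[OF V'(1,2)] by blast
    then obtain dl where dl: "\<And>y. dl y > (0::real)" "\<And>y t. \<bar>t\<bar> < dl y \<Longrightarrow> t *\<^sub>R y \<in> V'"
      by metis
    define d where "d = Min (insert 1 (dl ` T))"
    have "d > 0" unfolding d_def using T(1) dl(1) by (subst Min_gr_iff) auto
    have dle: "d \<le> dl y" if "y \<in> T" for y unfolding d_def using T(1) that by (intro Min_le) auto
    obtain m :: nat where m: "m > 0" "inverse (real m) < d"
      using \<open>d > 0\<close> ex_inverse_of_nat_less by blast
    define k where "k y = \<lfloor>real m * u y\<rfloor>" for y
    have x_split: "x = (1 / real m) *\<^sub>R (\<Sum>y\<in>T. of_int (k y) *\<^sub>R y)
        + (\<Sum>y\<in>T. (u y - of_int (k y) / real m) *\<^sub>R y)"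
    proof -
      have "x = (\<Sum>y\<in>T. (of_int (k y) / real m) *\<^sub>R y + (u y - of_int (k y) / real m) *\<^sub>R y)"
        unfolding x by (intro sum.cong refl) (simp add: scaleR_add_left[symmetric])
      also have "\<dots> = (1 / real m) *\<^sub>R (\<Sum>y\<in>T. of_int (k y) *\<^sub>R y)
        + (\<Sum>y\<in>T. (u y - of_int (k y) / real m) *\<^sub>R y)"
        by (simp add: sum.distrib scaleR_sum_right)
      finally show ?thesis .
    qed
    have p1: "(1 / real m) *\<^sub>R (\<Sum>y\<in>T. of_int (k y) *\<^sub>R y) \<in> V"
    proof -
      have "(\<Sum>y\<in>T. of_int (k y) *\<^sub>R y) \<in> V"
        using subgroup_int_comb[OF T] F(3) by blast
      moreover have "\<bar>1 / real m\<bar> \<le> 1" using m(1) by simp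
      ultimately show ?thesis using V(4) by blast
    qed
    have p2: "(\<Sum>y\<in>T. (u y - of_int (k y) / real m) *\<^sub>R y) \<in> V"
    proof -
      have "(u y - of_int (k y) / real m) *\<^sub>R y \<in> V'" if "y \<in> T" for y
      proof -
        have "of_int (k y) \<le> real m * u y" "real m * u y < of_int (k y) + 1"
          unfolding k_def by linarith+
        have eq: "u y - of_int (k y) / real m = (real m * u y - of_int (k y)) / real m"
          using m(1) by (simp add: field_simps)
        have "0 \<le> u y - of_int (k y) / real m" unfolding eq
          using \<open>of_int (k y) \<le> real m * u y\<close> by simp
        moreover have "u y - of_int (k y) / real m < 1 / real m" unfolding eq
          using \<open>real m * u y < of_int (k y) + 1\<close> m(1) by (intro divide_strict_right_mono) auto
        ultimately have "0 \<le> u y - of_int (k y) / real m" "u y - of_int (k y) / real m < 1 / real m" .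
        then have "\<bar>u y - of_int (k y) / real m\<bar> < dl y"
          using m(2) dle[OF that] by (simp add: inverse_eq_divide)
        then show ?thesis by (rule dl(2))
      qed
      then show ?thesis by (intro V'(3)[rule_format] T(1) order_refl ballI)
    qed
    have "(1 / real m) *\<^sub>R (\<Sum>y\<in>T. of_int (k y) *\<^sub>R y) \<in> V0" using p1 V(3) by (rule subsetD[rotated])
    moreover have "(\<Sum>y\<in>T. (u y - of_int (k y) / real m) *\<^sub>R y) \<in> V0" using p2 V(3) by (rule subsetD[rotated])
    ultimately show "x \<in> U" unfolding x_split using V0(3) by blast
  qed
  then show ?thesis using F by blast
qed

lemma compact_box:
  fixes b :: "nat \<Rightarrow> 'a"
  assumes "\<forall>i<n. compact (P i)"
  shows "compact {(\<Sum>i<n. r i *\<^sub>R b i) | r. \<forall>i<n. r i \<in> P i}"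
  using assms
proof (induction n)
  case 0
  then show ?case by simp
next
  case (Suc n)
  let ?Y = "{(\<Sum>i<n. r i *\<^sub>R b i) | r. \<forall>i<n. r i \<in> P i}"
  have eq: "{(\<Sum>i<Suc n. r i *\<^sub>R b i) | r. \<forall>i<Suc n. r i \<in> P i}
      = (\<lambda>z. fst z + snd z *\<^sub>R b n) ` (?Y \<times> P n)"
  proof
    show "{(\<Sum>i<Suc n. r i *\<^sub>R b i) | r. \<forall>i<Suc n. r i \<in> P i} \<subseteq> (\<lambda>z. fst z + snd z *\<^sub>R b n) ` (?Y \<times> P n)"
    proof
      fix y assume "y \<in> {(\<Sum>i<Suc n. r i *\<^sub>R b i) | r. \<forall>i<Suc n. r i \<in> P i}"
      then obtain r where r: "\<forall>i<Suc n. r i \<in> P i" "y = (\<Sum>i<Suc n. r i *\<^sub>R b i)" by blast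
      have "(\<Sum>i<n. r i *\<^sub>R b i) \<in> ?Y" using r(1) by auto
      moreover have "r n \<in> P n" using r(1) by auto
      ultimately show "y \<in> (\<lambda>z. fst z + snd z *\<^sub>R b n) ` (?Y \<times> P n)"
        using r(2) by (intro image_eqI[of _ _ "((\<Sum>i<n. r i *\<^sub>R b i), r n)"]) auto
    qed
  next
    show "(\<lambda>z. fst z + snd z *\<^sub>R b n) ` (?Y \<times> P n) \<subseteq> {(\<Sum>i<Suc n. r i *\<^sub>R b i) | r. \<forall>i<Suc n. r i \<in> P i}"
    proof
      fix y assume "y \<in> (\<lambda>z. fst z + snd z *\<^sub>R b n) ` (?Y \<times> P n)"
      then obtain r t where r: "\<forall>i<n. r i \<in> P i" "t \<in> P n" "y = (\<Sum>i<n. r i *\<^sub>R b i) + t *\<^sub>R b n"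
        by auto
      define r' where "r' = r(n := t)"
      have "\<forall>i<Suc n. r' i \<in> P i" using r unfolding r'_def by (auto simp: less_Suc_eq)
      moreover have "y = (\<Sum>i<Suc n. r' i *\<^sub>R b i)"
        using r(3) unfolding r'_def by (auto intro!: sum.cong)
      ultimately show "y \<in> {(\<Sum>i<Suc n. r i *\<^sub>R b i) | r. \<forall>i<Suc n. r i \<in> P i}" by blast
    qed
  qed
  have "compact (?Y \<times> P n)" using Suc by (intro compact_Times) auto
  moreover have "continuous_on (?Y \<times> P n) (\<lambda>z. fst z + snd z *\<^sub>R b n)"
    by (intro continuous_intros cont_scale')
  ultimately show ?case unfolding eq by (rule compact_continuous_image[rotated])
qed

lemma sep_exists:
  fixes b :: "nat \<Rightarrow> 'a"
  assumes indep: "\<forall>r. (\<Sum>i<n. r i *\<^sub>R b i) = 0 \<longrightarrow> (\<forall>i<n. r i = 0)"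
  shows "\<exists>Q. open Q \<and> 0 \<in> Q \<and> (\<forall>r. (\<exists>i<n. 1 \<le> \<bar>r i\<bar>) \<longrightarrow>
            (\<forall>p\<in>Q. \<forall>q\<in>Q. (\<Sum>i<n. r i *\<^sub>R b i) \<noteq> p + q))"
proof -
  define P where "P j i = (if i = j then {-1, 1} else {-1..1::real})" for j i :: nat
  define K where "K = (\<Union>j<n. {(\<Sum>i<n. r i *\<^sub>R b i) | r. \<forall>i<n. r i \<in> P j i})"
  have "compact K" unfolding K_def P_def
    by (intro compact_UN finite_lessThan compact_box) auto
  then have "closed K" by (rule compact_imp_closed)
  have "0 \<notin> K"
  proof
    assume "0 \<in> K"
    then obtain j r where jr: "j < n" "\<forall>i<n. r i \<in> P j i" "0 = (\<Sum>i<n. r i *\<^sub>R b i)"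
      unfolding K_def by blast
    then have "r j = 0" using indep by auto
    moreover have "r j \<in> {-1, 1}" using jr unfolding P_def by auto
    ultimately show False by auto
  qed
  have "open (- K)" using \<open>closed K\<close> by (simp add: open_Compl)
  obtain V where V: "open V" "0 \<in> V" "\<forall>x\<in>V. \<forall>y\<in>V. x + y \<in> - K"
    using nbhd_add[OF \<open>open (- K)\<close>] \<open>0 \<notin> K\<close> by blast
  obtain Q where Q: "open Q" "0 \<in> Q" "Q \<subseteq> V" "\<forall>x\<in>Q. \<forall>t::real. \<bar>t\<bar> \<le> 1 \<longrightarrow> t *\<^sub>R x \<in> Q"
    using balanced_nbhd[OF V(1,2)] by blast
  show ?thesis
  proof (intro exI[of _ Q] conjI allI impI ballI Q(1,2))
    fix r :: "nat \<Rightarrow> real" and p q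
    assume ex: "\<exists>i<n. 1 \<le> \<bar>r i\<bar>" and pq: "p \<in> Q" "q \<in> Q"
    show "(\<Sum>i<n. r i *\<^sub>R b i) \<noteq> p + q"
    proof
      assume eq: "(\<Sum>i<n. r i *\<^sub>R b i) = p + q"
      define l where "l = Max ((\<lambda>i. \<bar>r i\<bar>) ` {..<n})"
      obtain i0 where i0: "i0 < n" "1 \<le> \<bar>r i0\<bar>" using ex by blast
      have ne: "(\<lambda>i. \<bar>r i\<bar>) ` {..<n} \<noteq> {}" using i0 by auto
      have lge: "\<bar>r i\<bar> \<le> l" if "i < n" for i unfolding l_def using that by (intro Max_ge) auto
      have "1 \<le> l" using lge[OF i0(1)] i0(2) by linarith
      obtain j where j: "j < n" "\<bar>r j\<bar> = l"
        using Max_in[OF finite_imageI[OF finite_lessThan] ne] unfolding l_def by auto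
      define s where "s i = r i / l" for i
      have "(\<Sum>i<n. s i *\<^sub>R b i) \<in> K"
        unfolding K_def
      proof (rule UN_I[of j])
        show "j \<in> {..<n}" using j by simp
        have "s i \<in> P j i" if "i < n" for i
        proof (cases "i = j")
          case True
          then have "\<bar>s i\<bar> = 1" using j \<open>1 \<le> l\<close> unfolding s_def by (simp add: abs_divide)
          then show ?thesis using True unfolding P_def by (auto simp: abs_if split: if_splits)
        next
          case False
          have "\<bar>s i\<bar> \<le> 1" using lge[OF that] \<open>1 \<le> l\<close> unfolding s_def by (simp add: abs_divide)
          then show ?thesis using False unfolding P_def by (auto simp: abs_le_iff)
        qed
        then show "(\<Sum>i<n. s i *\<^sub>R b i) \<in> {(\<Sum>i<n. r i *\<^sub>R b i) | r. \<forall>i<n. r i \<in> P j i}"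
          by blast
      qed
      moreover have "(\<Sum>i<n. s i *\<^sub>R b i) = (1 / l) *\<^sub>R p + (1 / l) *\<^sub>R q"
      proof -
        have "(1 / l) *\<^sub>R (\<Sum>i<n. r i *\<^sub>R b i) = (\<Sum>i<n. s i *\<^sub>R b i)"
          by (simp add: scaleR_sum_right s_def)
        then show ?thesis using eq by (simp add: scaleR_add_right)
      qed
      moreover have "(1 / l) *\<^sub>R p \<in> V" "(1 / l) *\<^sub>R q \<in> V"
        using Q(3,4) pq \<open>1 \<le> l\<close> by auto
      ultimately show False using V(3) by force
    qed
  qed
qed

context
  fixes S :: "'a set"
  assumes inf: "infinite S" and acs: "abs_cauchy_summable S"
begin

definition indep :: "'a list \<Rightarrow> bool" where
  "indep xs \<longleftrightarrow> (\<forall>r. (\<Sum>i<length xs. r i *\<^sub>R xs ! i) = 0 \<longrightarrow> (\<forall>i<length xs. r i = 0))"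

definition sepQ :: "'a list \<Rightarrow> 'a set \<Rightarrow> bool" where
  "sepQ xs Q \<longleftrightarrow> open Q \<and> 0 \<in> Q \<and> (\<forall>r. (\<exists>i<length xs. 1 \<le> \<bar>r i\<bar>) \<longrightarrow>
            (\<forall>p\<in>Q. \<forall>q\<in>Q. (\<Sum>i<length xs. r i *\<^sub>R xs ! i) \<noteq> p + q))"

definition Fsel :: "'a list \<Rightarrow> 'a set" where
  "Fsel xs = (SOME F. finite F \<and> F \<subseteq> S \<and> (indep xs \<longrightarrow> (\<exists>Q. sepQ xs Q \<and> span (S - F) \<subseteq> Q)))"

lemma Fsel_spec: "finite (Fsel xs) \<and> Fsel xs \<subseteq> S \<and> (indep xs \<longrightarrow> (\<exists>Q. sepQ xs Q \<and> span (S - Fsel xs) \<subseteq> Q))"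
  unfolding Fsel_def
proof (rule someI_ex)
  show "\<exists>F. finite F \<and> F \<subseteq> S \<and> (indep xs \<longrightarrow> (\<exists>Q. sepQ xs Q \<and> span (S - F) \<subseteq> Q))"
  proof (cases "indep xs")
    case True
    obtain Q where Q: "open Q" "0 \<in> Q" "\<forall>r. (\<exists>i<length xs. 1 \<le> \<bar>r i\<bar>) \<longrightarrow>
            (\<forall>p\<in>Q. \<forall>q\<in>Q. (\<Sum>i<length xs. r i *\<^sub>R xs ! i) \<noteq> p + q)"
      using sep_exists[where n="length xs" and b="\<lambda>i. xs ! i"] True unfolding indep_def by blast
    obtain F where "finite F" "F \<subseteq> S" "span (S - F) \<subseteq> Q"
      using span_small[OF acs Q(1,2)] by blast
    then show ?thesis using Q unfolding sepQ_def by blast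
  next
    case False
    then show ?thesis by (intro exI[of _ "{}"]) auto
  qed
qed

definition nxt :: "'a list \<Rightarrow> 'a" where
  "nxt xs = (SOME b. b \<in> S \<and> b \<noteq> 0 \<and> (\<forall>i\<le>length xs. b \<notin> Fsel (take i xs)))"

lemma nxt_spec: "nxt xs \<in> S \<and> nxt xs \<noteq> 0 \<and> (\<forall>i\<le>length xs. nxt xs \<notin> Fsel (take i xs))"
  unfolding nxt_def
proof (rule someI_ex)
  have "finite (\<Union>i\<le>length xs. Fsel (take i xs))" using Fsel_spec by auto
  then have "infinite (S - (\<Union>i\<le>length xs. Fsel (take i xs)) - {0})"
    using inf by (metis Diff_infinite_finite finite.emptyI finite.insertI)
  from infinite_imp_nonempty[OF this] obtain b where "b \<in> S - (\<Union>i\<le>length xs. Fsel (take i xs)) - {0}"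
    by blast
  then show "\<exists>b. b \<in> S \<and> b \<noteq> 0 \<and> (\<forall>i\<le>length xs. b \<notin> Fsel (take i xs))" by blast
qed

fun bs :: "nat \<Rightarrow> 'a list" where
  "bs 0 = []"
| "bs (Suc n) = bs n @ [nxt (bs n)]"

definition bseq :: "nat \<Rightarrow> 'a" where "bseq n = nxt (bs n)"

lemma length_bs [simp]: "length (bs n) = n"
  by (induction n) auto

lemma bs_nth: "i < n \<Longrightarrow> bs n ! i = bseq i"
proof (induction n)
  case 0 then show ?case by simp
next
  case (Suc n)
  then show ?case by (cases "i = n") (auto simp: nth_append bseq_def less_Suc_eq)
qed

lemma take_bs: "i \<le> n \<Longrightarrow> take i (bs n) = bs i"
proof (induction n)
  case 0 then show ?case by simp
next
  case (Suc n)
  then show ?case by (cases "i = Suc n") (auto simp: le_Suc_eq)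
qed

lemma bseq_S: "bseq n \<in> S" and bseq_nz: "bseq n \<noteq> 0"
  using nxt_spec unfolding bseq_def by auto

lemma bseq_notin: "i \<le> n \<Longrightarrow> bseq n \<notin> Fsel (bs i)"
  using nxt_spec[of "bs n"] take_bs[of i n] unfolding bseq_def by auto

lemma sum_bs: "(\<Sum>i<n. r i *\<^sub>R bs n ! i) = (\<Sum>i<n. r i *\<^sub>R bseq i)"
  by (intro sum.cong refl) (simp add: bs_nth)

lemma indep_bs: "indep (bs n)"
proof (induction n)
  case 0 then show ?case by (simp add: indep_def)
next
  case (Suc n)
  obtain Q where Q: "sepQ (bs n) Q" "span (S - Fsel (bs n)) \<subseteq> Q"
    using Fsel_spec[of "bs n"] Suc by blast
  show ?case unfolding indep_def length_bs sum_bs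
  proof (intro allI impI)
    fix r :: "nat \<Rightarrow> real" and i
    assume r0: "(\<Sum>i<Suc n. r i *\<^sub>R bseq i) = 0" and "i < Suc n"
    have split: "(\<Sum>i<n. r i *\<^sub>R bseq i) + r n *\<^sub>R bseq n = 0" using r0 by simp
    have rn: "r n = 0"
    proof (rule ccontr)
      assume rn: "r n \<noteq> 0"
      define a where "a i = - r i / r n" for i
      have bsum: "(\<Sum>i<n. a i *\<^sub>R bseq i) = bseq n"
      proof -
        have "(\<Sum>i<n. a i *\<^sub>R bseq i) = (- 1 / r n) *\<^sub>R (\<Sum>i<n. r i *\<^sub>R bseq i)"
          by (simp add: scaleR_sum_right a_def)
        also have "\<dots> = (- 1 / r n) *\<^sub>R (- (r n *\<^sub>R bseq n))"
        proof -
          have "(\<Sum>i<n. r i *\<^sub>R bseq i) = - (r n *\<^sub>R bseq n)"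
            using split by (simp only: eq_neg_iff_add_eq_0)
          then show ?thesis by (simp only:)
        qed
        also have "\<dots> = bseq n" using rn by simp
        finally show ?thesis .
      qed
      have "\<exists>i0<n. a i0 \<noteq> 0"
      proof (rule ccontr)
        assume "\<not> (\<exists>i0<n. a i0 \<noteq> 0)"
        then have "(\<Sum>i<n. a i *\<^sub>R bseq i) = 0" by simp
        then show False using bsum bseq_nz by simp
      qed
      then obtain i0 where i0: "i0 < n" "a i0 \<noteq> 0" by blast
      define t where "t i = a i / \<bar>a i0\<bar>" for i
      have "\<bar>t i0\<bar> = 1" using i0 unfolding t_def by (simp add: abs_divide)
      then have ex: "\<exists>i<length (bs n). 1 \<le> \<bar>t i\<bar>" using i0 by auto
      have calc: "(\<Sum>i<length (bs n). t i *\<^sub>R bs n ! i) = (1 / \<bar>a i0\<bar>) *\<^sub>R bseq n + 0"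
        unfolding length_bs sum_bs bsum[symmetric] by (simp add: scaleR_sum_right t_def)
      have "bseq n \<in> span (S - Fsel (bs n))"
        using bseq_S[of n] bseq_notin[of n n] by (intro span_base) auto
      then have mem: "(1 / \<bar>a i0\<bar>) *\<^sub>R bseq n \<in> Q"
        by (intro subsetD[OF Q(2)] span_scale)
      have zero: "0 \<in> Q" using Q(1) unfolding sepQ_def by auto
      have H: "\<forall>p\<in>Q. \<forall>q\<in>Q. (\<Sum>i<length (bs n). t i *\<^sub>R bs n ! i) \<noteq> p + q"
        using Q(1) ex unfolding sepQ_def by blast
      from H[rule_format, OF mem zero] calc show False by simp
    qed
    have "(\<Sum>i<n. r i *\<^sub>R bseq i) = 0" using split rn by simp
    then have "\<forall>i<n. r i = 0" using Suc unfolding indep_def length_bs sum_bs by blast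
    then show "r i = 0" using rn \<open>i < Suc n\<close> by (auto simp: less_Suc_eq)
  qed
qed

lemma bseq_inj: "inj bseq"
proof (rule injI, rule ccontr)
  fix i j assume eq: "bseq i = bseq j" and ne: "i \<noteq> j"
  define m where "m = Suc (max i j)"
  define r :: "nat \<Rightarrow> real" where "r k = (if k = i then 1 else 0) - (if k = j then 1 else 0)" for k
  have "(\<Sum>k<m. r k *\<^sub>R bseq k) = (\<Sum>k<m. (if k = i then bseq k else 0)) - (\<Sum>k<m. (if k = j then bseq k else 0))"
    unfolding r_def by (simp add: scaleR_diff_left sum_subtractf if_distrib[of "\<lambda>c. c *\<^sub>R _"] cong: if_cong)
  also have "\<dots> = bseq i - bseq j" unfolding m_def by (simp add: sum.delta)
  also have "\<dots> = 0" using eq by simp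
  finally have "(\<Sum>k<m. r k *\<^sub>R bs m ! k) = 0" unfolding sum_bs .
  then have "r i = 0" using indep_bs[of m] unfolding indep_def length_bs m_def by auto
  then show False using ne unfolding r_def by simp
qed

lemma topspace_lS: "topspace (lS B) = {f \<in> (\<Pi>\<^sub>E b\<in>B. range (\<lambda>r::real. r *\<^sub>R b)). finite {b\<in>B. f b \<noteq> 0}}"
  unfolding lS_def real_line_top_def by auto

lemma lK_superset:
  assumes "finite A" "A \<subseteq> B" "{b\<in>B. f b \<noteq> 0} \<subseteq> A"
  shows "lK B f = sum f A"
  unfolding lK_def using assms by (intro sum.mono_neutral_left) auto

lemma lK_diff:
  assumes f: "f \<in> topspace (lS B)" and g: "g \<in> topspace (lS B)"
  shows "restrict (\<lambda>b. f b - g b) B \<in> topspace (lS B)"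
    and "lK B (restrict (\<lambda>b. f b - g b) B) = lK B f - lK B g"
proof -
  let ?h = "restrict (\<lambda>b. f b - g b) B"
  have fin: "finite ({b\<in>B. f b \<noteq> 0} \<union> {b\<in>B. g b \<noteq> 0})" using f g by (auto simp: topspace_lS)
  have "?h b \<in> range (\<lambda>r::real. r *\<^sub>R b)" if "b \<in> B" for b
  proof -
    have "f b \<in> range (\<lambda>r::real. r *\<^sub>R b)" "g b \<in> range (\<lambda>r::real. r *\<^sub>R b)"
      using f g that by (auto simp: topspace_lS PiE_iff)
    then obtain r s :: real where "f b = r *\<^sub>R b" "g b = s *\<^sub>R b" by blast
    then have "?h b = (r - s) *\<^sub>R b" using that by (simp add: scaleR_diff_left)
    then show ?thesis by blast
  qed
  then have pie: "?h \<in> (\<Pi>\<^sub>E b\<in>B. range (\<lambda>r::real. r *\<^sub>R b))" by (auto simp: PiE_iff)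
  have "{b\<in>B. ?h b \<noteq> 0} \<subseteq> {b\<in>B. f b \<noteq> 0} \<union> {b\<in>B. g b \<noteq> 0}" by auto
  then have finh: "finite {b\<in>B. ?h b \<noteq> 0}" using fin by (rule finite_subset)
  show "?h \<in> topspace (lS B)" unfolding topspace_lS using pie finh by blast
  have "lK B ?h = sum ?h ({b\<in>B. f b \<noteq> 0} \<union> {b\<in>B. g b \<noteq> 0})"
    by (rule lK_superset[OF fin]) auto
  also have "\<dots> = sum f ({b\<in>B. f b \<noteq> 0} \<union> {b\<in>B. g b \<noteq> 0}) - sum g ({b\<in>B. f b \<noteq> 0} \<union> {b\<in>B. g b \<noteq> 0})"
    by (subst sum_subtractf[symmetric]) (rule sum.cong, auto)
  also have "\<dots> = lK B f - lK B g"
    using lK_superset[OF fin, of B f] lK_superset[OF fin, of B g] by auto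
  finally show "lK B ?h = lK B f - lK B g" .
qed

lemma lK_bseq:
  assumes f: "f \<in> topspace (lS (range bseq))"
  shows "\<exists>N. \<forall>M\<ge>N. lK (range bseq) f = (\<Sum>i<M. f (bseq i))"
proof -
  have "finite {b\<in>range bseq. f b \<noteq> 0}" using f by (auto simp: topspace_lS)
  then have "finite (bseq -` {b\<in>range bseq. f b \<noteq> 0})"
    by (rule finite_vimageI[OF _ bseq_inj])
  then obtain N where N: "bseq -` {b\<in>range bseq. f b \<noteq> 0} \<subseteq> {..<N}"
    using finite_nat_bounded by blast
  show ?thesis
  proof (intro exI allI impI)
    fix M assume "N \<le> M"
    have "lK (range bseq) f = sum f (bseq ` {..<M})"
    proof (rule lK_superset)
      show "{b \<in> range bseq. f b \<noteq> 0} \<subseteq> bseq ` {..<M}"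
      proof
        fix b assume b: "b \<in> {b \<in> range bseq. f b \<noteq> 0}"
        then obtain i where "b = bseq i" by auto
        then have "i < N" using N b by auto
        then show "b \<in> bseq ` {..<M}" using \<open>b = bseq i\<close> \<open>N \<le> M\<close> by auto
      qed
    qed auto
    also have "\<dots> = (\<Sum>i<M. f (bseq i))"
      using sum.reindex[OF inj_on_subset[OF bseq_inj subset_UNIV[of "{..<M}"]], of f] by simp
    finally show "lK (range bseq) f = (\<Sum>i<M. f (bseq i))" .
  qed
qed

lemma coeffs:
  assumes f: "f \<in> topspace (lS (range bseq))"
  obtains c where "\<And>i. f (bseq i) = c i *\<^sub>R bseq i"
proof -
  have "\<forall>i. \<exists>c. f (bseq i) = c *\<^sub>R bseq i" using f by (auto simp: topspace_lS PiE_iff)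
  then have "\<exists>c. \<forall>i. f (bseq i) = c i *\<^sub>R bseq i" by (rule choice)
  then show ?thesis using that by blast
qed

lemma key:
  assumes "(e::real) > 0"
  shows "\<exists>W. open W \<and> 0 \<in> W \<and> (\<forall>f\<in>topspace (lS (range bseq)). \<forall>r.
            f (bseq j) = r *\<^sub>R bseq j \<longrightarrow> lK (range bseq) f \<in> W \<longrightarrow> \<bar>r\<bar> < e)"
proof -
  define n where "n = Suc j"
  obtain Q where Q: "sepQ (bs n) Q" "span (S - Fsel (bs n)) \<subseteq> Q"
    using Fsel_spec[of "bs n"] indep_bs[of n] by blast
  have Qo: "open Q" "0 \<in> Q" using Q(1) unfolding sepQ_def by auto
  define W where "W = (\<lambda>x. e *\<^sub>R x) ` Q"
  have "open W" unfolding W_def using Qo assms by (intro open_scaled) auto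
  moreover have "0 \<in> W" unfolding W_def using Qo by (auto intro!: image_eqI[of _ _ 0])
  moreover have "\<bar>r\<bar> < e" if f: "f \<in> topspace (lS (range bseq))" and fr: "f (bseq j) = r *\<^sub>R bseq j"
    and fW: "lK (range bseq) f \<in> W" for f r
  proof (rule ccontr)
    assume "\<not> \<bar>r\<bar> < e"
    then have re: "e \<le> \<bar>r\<bar>" by simp
    obtain N where N: "\<forall>M\<ge>N. lK (range bseq) f = (\<Sum>i<M. f (bseq i))" using lK_bseq[OF f] by blast
    define M where "M = max N n"
    have lKf: "lK (range bseq) f = (\<Sum>i<M. f (bseq i))" using N M_def by auto
    obtain c where c: "\<And>i. f (bseq i) = c i *\<^sub>R bseq i" using coeffs[OF f] by blast
    have cj: "c j = r" using c[of j] fr bseq_nz[of j] by (metis scaleR_cancel_right)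
    define t where "t = (\<Sum>i\<in>{n..<M}. c i *\<^sub>R bseq i)"
    have tspan: "t \<in> span (S - Fsel (bs n))"
      unfolding t_def
    proof (intro span_sum span_scale span_base)
      fix i assume "i \<in> {n..<M}"
      then show "bseq i \<in> S - Fsel (bs n)" using bseq_S bseq_notin[of n i] by auto
    qed
    have "lK (range bseq) f = (\<Sum>i<n. c i *\<^sub>R bseq i) + t"
    proof -
      have "(\<Sum>i<M. f (bseq i)) = (\<Sum>i\<in>{0..<n}. c i *\<^sub>R bseq i) + (\<Sum>i\<in>{n..<M}. c i *\<^sub>R bseq i)"
        unfolding c lessThan_atLeast0 using M_def by (intro sum.atLeastLessThan_concat[symmetric]) auto
      then show ?thesis unfolding lKf t_def lessThan_atLeast0 .
    qed
    obtain w where w: "w \<in> Q" "lK (range bseq) f = e *\<^sub>R w" using fW unfolding W_def by auto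
    define rr where "rr i = c i / e" for i
    have eqw: "(\<Sum>i<length (bs n). rr i *\<^sub>R bs n ! i) = w + (- (1 / e) *\<^sub>R t)"
    proof -
      have "(\<Sum>i<length (bs n). rr i *\<^sub>R bs n ! i) = (1 / e) *\<^sub>R (\<Sum>i<n. c i *\<^sub>R bseq i)"
        unfolding length_bs sum_bs by (simp add: scaleR_sum_right rr_def)
      also have "\<dots> = (1 / e) *\<^sub>R (lK (range bseq) f - t)"
        using \<open>lK (range bseq) f = (\<Sum>i<n. c i *\<^sub>R bseq i) + t\<close> by simp
      also have "\<dots> = w + (- (1 / e) *\<^sub>R t)"
        using w(2) assms by (simp add: scaleR_diff_right)
      finally show ?thesis .
    qed
    have mem: "- (1 / e) *\<^sub>R t \<in> Q" using tspan by (intro subsetD[OF Q(2)] span_scale)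
    have ex: "\<exists>i<length (bs n). 1 \<le> \<bar>rr i\<bar>"
      using re assms cj unfolding rr_def n_def by (intro exI[of _ j]) (auto simp: abs_divide)
    have H: "\<forall>p\<in>Q. \<forall>q\<in>Q. (\<Sum>i<length (bs n). rr i *\<^sub>R bs n ! i) \<noteq> p + q"
      using Q(1) ex unfolding sepQ_def by blast
    from H[rule_format, OF w(1) mem] eqw show False by simp
  qed
  ultimately show ?thesis by blast
qed

lemma cont_lK: "continuous_map (lS (range bseq)) euclidean (lK (range bseq))"
  unfolding continuous_map_openin_preimage_eq
proof (intro conjI allI impI)
  show "lK (range bseq) \<in> topspace (lS (range bseq)) \<rightarrow> topspace euclidean" by (intro funcsetI) (simp only: topspace_euclidean UNIV_I)
  fix U :: "'a set" assume "openin euclidean U"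
  then have "open U" by (simp only: open_openin)
  let ?B = "range bseq"
  let ?T = "topspace (lS ?B)"
  show "openin (lS ?B) (?T \<inter> lK ?B -` U)"
  proof (rule openin_subopen[THEN iffD2], intro ballI)
    fix f0 assume f0U: "f0 \<in> ?T \<inter> lK ?B -` U"
    then have f0: "f0 \<in> ?T" and f0U': "lK ?B f0 \<in> U" by auto
    define V where "V = {x. x - (- lK ?B f0) \<in> U}"
    have "open V" unfolding V_def using \<open>open U\<close> by (rule open_translate)
    moreover have "0 \<in> V" unfolding V_def using f0U' by simp
    ultimately obtain V1 where V1: "open V1" "0 \<in> V1" "\<forall>x\<in>V1. \<forall>y\<in>V1. x + y \<in> V"
      using nbhd_add by blast
    obtain F where F: "finite F" "F \<subseteq> S" "span (S - F) \<subseteq> V1"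
      using span_small[OF acs V1(1,2)] by blast
    have "finite {b\<in>?B. f0 b \<noteq> 0}" using f0 by (auto simp: topspace_lS)
    then have "finite (bseq -` {b\<in>?B. f0 b \<noteq> 0})" by (rule finite_vimageI[OF _ bseq_inj])
    then obtain M1 where M1: "bseq -` {b\<in>?B. f0 b \<noteq> 0} \<subseteq> {..<M1}"
      using finite_nat_bounded by blast
    have "finite (bseq -` F)" using F(1) by (rule finite_vimageI[OF _ bseq_inj])
    then obtain M2 where M2: "bseq -` F \<subseteq> {..<M2}"
      using finite_nat_bounded by blast
    define M where "M = max M1 M2"
    obtain V2 where V2: "open V2" "0 \<in> V2"
      "\<forall>(I::nat set) g. finite I \<longrightarrow> card I \<le> M \<longrightarrow> (\<forall>i\<in>I. g i \<in> V2) \<longrightarrow> sum g I \<in> V1"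
      using nsum_nbhd[OF V1(1,2)] by blast
    define Ui where "Ui b = (if b \<in> bseq ` {..<M} then range (\<lambda>r::real. r *\<^sub>R b) \<inter> {y. y - f0 b \<in> V2}
        else range (\<lambda>r::real. r *\<^sub>R b))" for b
    define N where "N = (\<Pi>\<^sub>E b\<in>?B. Ui b) \<inter> {f. finite {b\<in>?B. f b \<noteq> 0}}"
    have "openin (lS ?B) N"
      unfolding lS_def N_def
    proof (intro openin_subtopology_Int product_topology_basis)
      fix b
      show "openin (real_line_top b) (Ui b)"
      proof (cases "b \<in> bseq ` {..<M}")
        case True
        have "open {y. y - f0 b \<in> V2}" using V2(1) by (rule open_translate)
        then have "openin (real_line_top b) (range (\<lambda>r::real. r *\<^sub>R b) \<inter> {y. y - f0 b \<in> V2})"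
          unfolding real_line_top_def by (intro openin_subtopology_Int2) (simp only: open_openin[symmetric])
        then show ?thesis using True unfolding Ui_def by simp
      next
        case False
        have "openin (real_line_top b) (topspace (real_line_top b))" by (rule openin_topspace)
        then show ?thesis using False unfolding Ui_def real_line_top_def by simp
      qed
    next
      have "{b. Ui b \<noteq> topspace (real_line_top b)} \<subseteq> bseq ` {..<M}"
        unfolding Ui_def real_line_top_def by auto
      then show "finite {b. Ui b \<noteq> topspace (real_line_top b)}" by (rule finite_subset) auto
    qed
    moreover have "f0 \<in> N"
    proof -
      have "f0 \<in> (\<Pi>\<^sub>E b\<in>?B. range (\<lambda>r::real. r *\<^sub>R b))" "finite {b\<in>?B. f0 b \<noteq> 0}"
        using f0 by (auto simp: topspace_lS)
      then show ?thesis unfolding N_def Ui_def using V2(2) by (auto simp: PiE_iff)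
    qed
    moreover have "N \<subseteq> ?T \<inter> lK ?B -` U"
    proof
      fix f assume fN: "f \<in> N"
      have Ui_sub: "Ui b \<subseteq> range (\<lambda>r::real. r *\<^sub>R b)" for b unfolding Ui_def by auto
      have f: "f \<in> ?T" using fN Ui_sub unfolding N_def topspace_lS by (auto simp: PiE_iff)
      let ?h = "restrict (\<lambda>b. f b - f0 b) ?B"
      have h: "?h \<in> ?T" and lKh: "lK ?B ?h = lK ?B f - lK ?B f0" using lK_diff[OF f f0] by auto
      obtain N0 where N0: "\<forall>M'\<ge>N0. lK ?B ?h = (\<Sum>i<M'. ?h (bseq i))" using lK_bseq[OF h] by blast
      define M' where "M' = max N0 M"
      have "lK ?B ?h = (\<Sum>i<M'. ?h (bseq i))" using N0 M'_def by auto
      also have "\<dots> = (\<Sum>i\<in>{0..<M}. ?h (bseq i)) + (\<Sum>i\<in>{M..<M'}. ?h (bseq i))"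
        unfolding lessThan_atLeast0 using M'_def by (intro sum.atLeastLessThan_concat[symmetric]) auto
      finally have hsplit: "lK ?B ?h = (\<Sum>i\<in>{0..<M}. ?h (bseq i)) + (\<Sum>i\<in>{M..<M'}. ?h (bseq i))" .
      have p1: "(\<Sum>i\<in>{0..<M}. ?h (bseq i)) \<in> V1"
      proof -
        have "?h (bseq i) \<in> V2" if "i \<in> {0..<M}" for i
        proof -
          have "f (bseq i) \<in> Ui (bseq i)" using fN unfolding N_def by (auto simp: PiE_iff)
          moreover have "bseq i \<in> bseq ` {..<M}" using that by auto
          ultimately show ?thesis unfolding Ui_def by simp
        qed
        then show ?thesis using V2(3) by simp
      qed
      have p2: "(\<Sum>i\<in>{M..<M'}. ?h (bseq i)) \<in> V1"
      proof -
        obtain c where c: "\<And>i. f (bseq i) = c i *\<^sub>R bseq i" using coeffs[OF f] by blast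
        have "(\<Sum>i\<in>{M..<M'}. ?h (bseq i)) = (\<Sum>i\<in>{M..<M'}. c i *\<^sub>R bseq i)"
        proof (intro sum.cong refl)
          fix i assume i: "i \<in> {M..<M'}"
          then have "i \<notin> {..<M1}" unfolding M_def by auto
          then have "f0 (bseq i) = 0" using M1 by auto
          then show "?h (bseq i) = c i *\<^sub>R bseq i" using c[of i] by simp
        qed
        also have "\<dots> \<in> span (S - F)"
        proof (intro span_sum span_scale span_base)
          fix i assume i: "i \<in> {M..<M'}"
          then have "i \<notin> {..<M2}" unfolding M_def by auto
          then have "bseq i \<notin> F" using M2 by auto
          then show "bseq i \<in> S - F" using bseq_S by auto
        qed
        finally show ?thesis using F(3) by blast
      qed
      have "lK ?B f - lK ?B f0 = (\<Sum>i\<in>{0..<M}. ?h (bseq i)) + (\<Sum>i\<in>{M..<M'}. ?h (bseq i))"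
        using hsplit lKh by simp
      moreover have "(\<Sum>i\<in>{0..<M}. ?h (bseq i)) + (\<Sum>i\<in>{M..<M'}. ?h (bseq i)) \<in> V"
        using V1(3) p1 p2 by blast
      ultimately have "lK ?B f - lK ?B f0 \<in> V" by simp
      then have "lK ?B f \<in> U" unfolding V_def by simp
      then show "f \<in> ?T \<inter> lK ?B -` U" using f by simp
    qed
    ultimately show "\<exists>N. openin (lS ?B) N \<and> f0 \<in> N \<and> N \<subseteq> ?T \<inter> lK ?B -` U" by blast
  qed
qed

lemma inj_lK: "inj_on (lK (range bseq)) (topspace (lS (range bseq)))"
proof (rule inj_onI)
  let ?B = "range bseq"
  fix f g assume f: "f \<in> topspace (lS ?B)" and g: "g \<in> topspace (lS ?B)" and eq: "lK ?B f = lK ?B g"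
  let ?h = "restrict (\<lambda>b. f b - g b) ?B"
  have h: "?h \<in> topspace (lS ?B)" and lKh: "lK ?B ?h = lK ?B f - lK ?B g" using lK_diff[OF f g] by auto
  have "f b = g b" if bB: "b \<in> ?B" for b
  proof -
    obtain j where j: "b = bseq j" using bB by auto
    obtain c where c: "\<And>i. ?h (bseq i) = c i *\<^sub>R bseq i" using coeffs[OF h] by blast
    have "c j = 0"
    proof (rule ccontr)
      assume "c j \<noteq> 0"
      then have "\<bar>c j\<bar> > 0" by simp
      then obtain W where W: "open W" "0 \<in> W" "\<forall>f\<in>topspace (lS ?B). \<forall>r.
            f (bseq j) = r *\<^sub>R bseq j \<longrightarrow> lK ?B f \<in> W \<longrightarrow> \<bar>r\<bar> < \<bar>c j\<bar>"
        using key by blast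
      have "lK ?B ?h \<in> W" using lKh eq W(2) by simp
      then have "\<bar>c j\<bar> < \<bar>c j\<bar>" using W(3) h c[of j] by blast
      then show False by simp
    qed
    then have "?h b = 0" using c[of j] j by simp
    then show ?thesis using bB by simp
  qed
  moreover have "f \<in> extensional ?B" "g \<in> extensional ?B" using f g by (auto simp: topspace_lS PiE_iff)
  ultimately show "f = g" by (intro extensionalityI) auto
qed

lemma open_lK: "open_map (lS (range bseq)) (subtopology euclidean (lK (range bseq) ` topspace (lS (range bseq)))) (lK (range bseq))"
  unfolding open_map_def
proof (intro allI impI)
  let ?B = "range bseq"
  let ?T = "topspace (lS ?B)"
  let ?Im = "lK ?B ` ?T"
  fix A assume "openin (lS ?B) A"
  then have AT: "A \<subseteq> ?T" by (rule openin_subset)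
  from \<open>openin (lS ?B) A\<close> obtain A' where A': "openin (product_topology real_line_top ?B) A'"
    "A = A' \<inter> {f. finite {b\<in>?B. f b \<noteq> 0}}"
    unfolding lS_def openin_subtopology by blast
  show "openin (subtopology euclidean ?Im) (lK ?B ` A)"
  proof (rule openin_subopen[THEN iffD2], intro ballI)
    fix y assume "y \<in> lK ?B ` A"
    then obtain f0 where f0A: "f0 \<in> A" and y: "y = lK ?B f0" by blast
    have f0: "f0 \<in> ?T" using f0A AT by blast
    obtain U where U: "finite {i \<in> ?B. U i \<noteq> topspace (real_line_top i)}"
      "\<forall>i\<in>?B. openin (real_line_top i) (U i)" "f0 \<in> Pi\<^sub>E ?B U" "Pi\<^sub>E ?B U \<subseteq> A'"
      using A'(1) f0A A'(2) unfolding openin_product_topology_alt by blast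
    define J where "J = {i \<in> ?B. U i \<noteq> topspace (real_line_top i)}"
    have loc: "\<exists>W. open W \<and> 0 \<in> W \<and> (\<forall>g\<in>?T. lK ?B g - lK ?B f0 \<in> W \<longrightarrow> g i \<in> U i)"
      if iJ: "i \<in> J" for i
    proof -
      have iB: "i \<in> ?B" using iJ unfolding J_def by blast
      then obtain j where j: "i = bseq j" by blast
      have "openin (subtopology euclidean (range (\<lambda>r::real. r *\<^sub>R i))) (U i)"
        using U(2) iB unfolding real_line_top_def by blast
      then obtain Oi where Oi0: "openin euclidean Oi" "U i = Oi \<inter> range (\<lambda>r::real. r *\<^sub>R i)"
        unfolding openin_subtopology by blast
      have Oi: "open Oi" "U i = Oi \<inter> range (\<lambda>r::real. r *\<^sub>R i)"
        using Oi0 by (simp_all only: open_openin)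
      have f0i: "f0 i \<in> U i" using U(3) iB by (auto simp: PiE_iff)
      then obtain c0 where c0: "f0 i = c0 *\<^sub>R i" using Oi(2) by auto
      have "open {x. x - (- f0 i) \<in> Oi}" using Oi(1) by (rule open_translate)
      moreover have "0 \<in> {x. x - (- f0 i) \<in> Oi}" using f0i Oi(2) by simp
      ultimately obtain d :: real where d: "d > 0" "\<And>t. \<bar>t\<bar> < d \<Longrightarrow> t *\<^sub>R i \<in> {x. x - (- f0 i) \<in> Oi}"
        using line_small by blast
      obtain W where W: "open W" "0 \<in> W" "\<forall>f\<in>?T. \<forall>r.
            f (bseq j) = r *\<^sub>R bseq j \<longrightarrow> lK ?B f \<in> W \<longrightarrow> \<bar>r\<bar> < d"
        using key[OF d(1)] by blast
      have "g i \<in> U i" if g: "g \<in> ?T" and gW: "lK ?B g - lK ?B f0 \<in> W" for g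
      proof -
        let ?h = "restrict (\<lambda>b. g b - f0 b) ?B"
        have h: "?h \<in> ?T" and lKh: "lK ?B ?h = lK ?B g - lK ?B f0" using lK_diff[OF g f0] by auto
        have "g i \<in> range (\<lambda>r::real. r *\<^sub>R i)" using g iB by (auto simp: topspace_lS PiE_iff)
        then obtain cg where cg: "g i = cg *\<^sub>R i" by auto
        have hj: "?h (bseq j) = (cg - c0) *\<^sub>R bseq j" using iB j cg c0 by (simp add: scaleR_diff_left)
        have "lK ?B ?h \<in> W" using lKh gW by simp
        then have "\<bar>cg - c0\<bar> < d" by (rule W(3)[rule_format, OF h hj])
        then have "(cg - c0) *\<^sub>R i + f0 i \<in> Oi" using d(2) by simp
        moreover have "(cg - c0) *\<^sub>R i + f0 i = g i" using cg c0 by (simp add: scaleR_diff_left)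
        ultimately show ?thesis using Oi(2) cg by auto
      qed
      then show ?thesis using W(1,2) by blast
    qed
    then obtain Wf where Wf: "\<And>i. i \<in> J \<Longrightarrow> open (Wf i) \<and> 0 \<in> Wf i \<and>
        (\<forall>g\<in>?T. lK ?B g - lK ?B f0 \<in> Wf i \<longrightarrow> g i \<in> U i)"
      by metis
    define W where "W = (\<Inter>i\<in>J. Wf i)"
    have "open W" unfolding W_def using U(1) Wf unfolding J_def by (intro open_INT) auto
    define Ob where "Ob = {x. x - lK ?B f0 \<in> W}"
    have "open Ob" unfolding Ob_def using \<open>open W\<close> by (rule open_translate)
    have "openin (subtopology euclidean ?Im) (Ob \<inter> ?Im)"
      by (rule openin_subtopology_Int) (simp only: open_openin[symmetric] \<open>open Ob\<close>)
    moreover have "y \<in> Ob \<inter> ?Im"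
    proof
      show "y \<in> Ob" unfolding Ob_def W_def y using Wf by auto
      show "y \<in> ?Im" using y f0 by blast
    qed
    moreover have "Ob \<inter> ?Im \<subseteq> lK ?B ` A"
    proof
      fix y' assume "y' \<in> Ob \<inter> ?Im"
      then obtain g where g: "g \<in> ?T" "y' = lK ?B g" and gW: "lK ?B g - lK ?B f0 \<in> W"
        unfolding Ob_def by blast
      have "g \<in> Pi\<^sub>E ?B U"
      proof (rule PiE_I)
        fix i assume iB: "i \<in> ?B"
        show "g i \<in> U i"
        proof (cases "i \<in> J")
          case True
          then show ?thesis using Wf[OF True] g(1) gW unfolding W_def by blast
        next
          case False
          then have "U i = range (\<lambda>r::real. r *\<^sub>R i)" using iB unfolding J_def real_line_top_def by simp
          then show ?thesis using g(1) iB by (auto simp: topspace_lS PiE_iff)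
        qed
      next
        fix i assume "i \<notin> ?B"
        have gP: "g \<in> (\<Pi>\<^sub>E b\<in>?B. range (\<lambda>r::real. r *\<^sub>R b))" using g(1) unfolding topspace_lS by blast
        then show "g i = undefined" using \<open>i \<notin> ?B\<close> by (rule PiE_arb)
      qed
      then have "g \<in> A" using U(4) A'(2) g(1) by (auto simp: topspace_lS)
      then show "y' \<in> lK ?B ` A" using g(2) by blast
    qed
    ultimately show "\<exists>T. openin (subtopology euclidean ?Im) T \<and> y \<in> T \<and> T \<subseteq> lK ?B ` A" by blast
  qed
qed

lemma main_aux: "\<exists>B. B \<subseteq> S \<and> 0 \<notin> B \<and> infinite B \<and> embedding_map (lS B) euclidean (lK B)"
proof (intro exI conjI)
  show "range bseq \<subseteq> S" using bseq_S by auto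
  show "0 \<notin> range bseq" using bseq_nz by (metis rangeE)
  show "infinite (range bseq)" using bseq_inj by (rule range_inj_infinite)
  show "embedding_map (lS (range bseq)) euclidean (lK (range bseq))"
    unfolding embedding_map_def
  proof (rule bijective_open_imp_homeomorphic_map)
    show "continuous_map (lS (range bseq)) (subtopology euclidean (lK (range bseq) ` topspace (lS (range bseq)))) (lK (range bseq))"
      by (rule continuous_map_into_subtopology[OF cont_lK]) blast
  next
    show "open_map (lS (range bseq)) (subtopology euclidean (lK (range bseq) ` topspace (lS (range bseq)))) (lK (range bseq))"
      by (rule open_lK)
  next
    show "lK (range bseq) ` topspace (lS (range bseq)) = topspace (subtopology euclidean (lK (range bseq) ` topspace (lS (range bseq))))"
      by (simp only: topspace_subtopology topspace_euclidean Int_UNIV_left)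
  next
    show "inj_on (lK (range bseq)) (topspace (lS (range bseq)))" by (rule inj_lK)
  qed
qed

end

end

theorem theorem10p4:
  fixes S :: "'a::{real_vector, topological_ab_group_add, t2_space} set"
  assumes tvs: "continuous_on UNIV (\<lambda>p::real \<times> 'a. fst p *\<^sub>R snd p)"
    and inf: "infinite S"
    and acs: "abs_cauchy_summable S"
  shows "\<exists>B. B \<subseteq> S \<and> 0 \<notin> B \<and> infinite B \<and>
             embedding_map (lS B) euclidean (lK B)"
  using main_aux[OF tvs inf acs] .

end
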